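(* Let $\Lambda$ be any lattice in $\mathbb{E}^3$ whose shortest non-zero lattice vector has length $2$. Then for every integer $n\ge 2$, $$C_{\Lambda}(n) < 6n-\frac{3\sqrt[3]{18\pi}}{\pi}\,n^{2/3} = 6n-3.665\ldots\, n^{2/3}.$$
   Context: A lattice in $\mathbb{E}^3$ is the set of integer linear combinations of three fixed linearly independent vectors. A packing of unit balls is a family of closed unit balls with pairwise disjoint interiors; its contact number is the number of unordered pairs of balls that touch (centers at distance exactly $2$). $C_\Lambda(n)$ denotes the largest contact number among all packings of $n$ unit balls in $\mathbb{E}^3$ all of whose centers are points of $\Lambda$. *)

theory Defs
  imports "HOL-Analysis.Analysis"
begin

definition lattice3 :: "(real^3) set \<Rightarrow> bool" where
  "lattice3 L \<longleftrightarrow> (\<exists>b1 b2 b3. card {b1, b2, b3} = 3 \<and> independent {b1, b2, b3} \<and>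
      L = {of_int i *\<^sub>R b1 + of_int j *\<^sub>R b2 + of_int k *\<^sub>R b3 | i j k. True})"

text \<open>A packing of closed unit balls, given by the (distinct) centers: interiors pairwise
  disjoint iff centers are at distance at least 2.\<close>
definition unit_ball_packing :: "(real^3) set \<Rightarrow> bool" where
  "unit_ball_packing P \<longleftrightarrow> finite P \<and> (\<forall>x\<in>P. \<forall>y\<in>P. x \<noteq> y \<longrightarrow> dist x y \<ge> 2)"

definition contact_number :: "(real^3) set \<Rightarrow> nat" where
  "contact_number P = card {{x, y} | x y. x \<in> P \<and> y \<in> P \<and> dist x y = 2}"

definition lattice_contact_max :: "(real^3) set \<Rightarrow> nat \<Rightarrow> nat" where
  "lattice_contact_max L n =
     Max {contact_number P | P. P \<subseteq> L \<and> unit_ball_packing P \<and> card P = n}"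

end

theory Submission
  imports Defs
begin

definition det3 :: "real^3 \<Rightarrow> real^3 \<Rightarrow> real^3 \<Rightarrow> real" where
  "det3 a b c = a$1*(b$2*c$3 - b$3*c$2) - a$2*(b$1*c$3 - b$3*c$1) + a$3*(b$1*c$2 - b$2*c$1)"
lemma det3_expand:
  "det3 a b c *\<^sub>R x = det3 x b c *\<^sub>R a + det3 a x c *\<^sub>R b + det3 a b x *\<^sub>R c"
  unfolding det3_def vec_eq_iff forall_3 by (simp add: algebra_simps)

lemma det3_indep:
  assumes "independent {b1, b2, b3::real^3}" "card {b1,b2,b3} = 3"
  shows "det3 b1 b2 b3 \<noteq> 0"
proof -
  let ?A = "vector [b1,b2,b3] :: real^3^3"
  have r0: "rows ?A = range (\<lambda>i. ?A$i)" by (auto simp: rows_def row_def vec_lambda_eta)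
  have "range (\<lambda>i. ?A$i) = {b1,b2,b3}"
  proof (intro set_eqI iffI)
    fix x assume "x \<in> range (\<lambda>i. ?A$i)"
    then obtain i where "x = ?A$i" by auto
    then show "x \<in> {b1,b2,b3}" using exhaust_3[of i] by auto
  next
    fix x assume "x \<in> {b1,b2,b3}"
    then show "x \<in> range (\<lambda>i. ?A$i)"
      using rangeI[of "\<lambda>i. ?A$i" 1] rangeI[of "\<lambda>i. ?A$i" 2] rangeI[of "\<lambda>i. ?A$i" 3] by auto
  qed
  with r0 have r: "rows ?A = {b1,b2,b3}" by simp
  have "rank ?A = 3" unfolding row_rank_def r using dim_eq_card_independent[OF assms(1)] assms(2) by simp
  then have "det ?A \<noteq> 0" using det_eq_0_rank[of ?A] by simp
  then show ?thesis unfolding det_3 det3_def by (simp add: algebra_simps)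
qed

lemma det3_lin:
 "det3 (x+y) b c = det3 x b c + det3 y b c"
 "det3 a (x+y) c = det3 a x c + det3 a y c"
 "det3 a b (x+y) = det3 a b x + det3 a b y"
 "det3 (r *\<^sub>R x) b c = r * det3 x b c"
 "det3 a (r *\<^sub>R x) c = r * det3 a x c"
 "det3 a b (r *\<^sub>R x) = r * det3 a b x"
 "det3 (-x) b c = - det3 x b c"
 "det3 a (-x) c = - det3 a x c"
 "det3 a b (-x) = - det3 a b x"
 "det3 (x-y) b c = det3 x b c - det3 y b c"
 "det3 a (x-y) c = det3 a x c - det3 a y c"
 "det3 a b (x-y) = det3 a b x - det3 a b y"
 unfolding det3_def by (simp_all add: algebra_simps)

lemma det3_same: "det3 a a c = 0" "det3 a b a = 0" "det3 a b b = 0"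
  "det3 b a a = 0" 
  unfolding det3_def by (simp_all add: algebra_simps)

lemma det3_swap: "det3 b a c = - det3 a b c" "det3 a c b = - det3 a b c" "det3 c b a = - det3 a b c"
  unfolding det3_def by (simp_all add: algebra_simps)

definition zdet :: "int \<Rightarrow> int \<Rightarrow> int \<Rightarrow> int \<Rightarrow> int \<Rightarrow> int \<Rightarrow> int \<Rightarrow> int \<Rightarrow> int \<Rightarrow> int" where
  "zdet a1 a2 a3 b1 b2 b3 c1 c2 c3 = a1*(b2*c3 - b3*c2) - a2*(b1*c3 - b3*c1) + a3*(b1*c2 - b2*c1)"

locale lat =
  fixes b1 b2 b3 :: "real^3" and L :: "(real^3) set"
  assumes Dnz: "det3 b1 b2 b3 \<noteq> 0"
  and Ldef: "L = {of_int i *\<^sub>R b1 + of_int j *\<^sub>R b2 + of_int k *\<^sub>R b3 | i j k. True}"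
  and minn: "\<forall>v\<in>L. v \<noteq> 0 \<longrightarrow> norm v \<ge> 2"
begin

definition cf :: "int \<Rightarrow> int \<Rightarrow> int \<Rightarrow> real^3" where
  "cf i j k = of_int i *\<^sub>R b1 + of_int j *\<^sub>R b2 + of_int k *\<^sub>R b3"

definition c1 where "c1 v = \<lfloor>det3 v b2 b3 / det3 b1 b2 b3\<rfloor>"
definition c2 where "c2 v = \<lfloor>det3 b1 v b3 / det3 b1 b2 b3\<rfloor>"
definition c3 where "c3 v = \<lfloor>det3 b1 b2 v / det3 b1 b2 b3\<rfloor>"

lemma det_cf: "det3 (cf i j k) b2 b3 = of_int i * det3 b1 b2 b3"
  "det3 b1 (cf i j k) b3 = of_int j * det3 b1 b2 b3"
  "det3 b1 b2 (cf i j k) = of_int k * det3 b1 b2 b3"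
  unfolding cf_def by (simp_all add: det3_lin det3_same)

lemma c_cf[simp]: "c1 (cf i j k) = i" "c2 (cf i j k) = j" "c3 (cf i j k) = k"
  unfolding c1_def c2_def c3_def det_cf using Dnz by simp_all

lemma L_cf: "L = range (\<lambda>(i,j,k). cf i j k)"
proof (intro set_eqI iffI)
  fix x assume "x \<in> L" then obtain i j k where "x = cf i j k" unfolding Ldef cf_def by auto
  then show "x \<in> range (\<lambda>(i,j,k). cf i j k)" using rangeI[of "\<lambda>(i,j,k). cf i j k" "(i,j,k)"] by simp
next
  fix x assume "x \<in> range (\<lambda>(i,j,k). cf i j k)"
  then obtain i j k where "x = cf i j k" by auto
  then show "x \<in> L" unfolding Ldef cf_def by auto
qed

lemma cf_in[simp]: "cf i j k \<in> L" unfolding L_cf using rangeI[of "\<lambda>(i,j,k). cf i j k" "(i,j,k)"] by simp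

lemma L_cases: assumes "v \<in> L" shows "v = cf (c1 v) (c2 v) (c3 v)"
proof -
  from assms obtain i j k where "v = cf i j k" unfolding L_cf by auto
  then show ?thesis by simp
qed

lemma cf_add: "cf i j k + cf i' j' k' = cf (i+i') (j+j') (k+k')"
  unfolding cf_def by (simp add: algebra_simps)
lemma cf_diff: "cf i j k - cf i' j' k' = cf (i-i') (j-j') (k-k')"
  unfolding cf_def by (simp add: algebra_simps)
lemma cf_neg: "- cf i j k = cf (-i) (-j) (-k)"
  unfolding cf_def by (simp add: algebra_simps)
lemma cf_scale: "of_int m *\<^sub>R cf i j k = cf (m*i) (m*j) (m*k)"
  unfolding cf_def by (simp add: algebra_simps)

lemma L_add: assumes "v \<in> L" "w \<in> L" shows "v + w \<in> L"
proof -
  have "v + w = cf (c1 v + c1 w) (c2 v + c2 w) (c3 v + c3 w)"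
    using L_cases[OF assms(1)] L_cases[OF assms(2)] cf_add by metis
  then show ?thesis by simp
qed
lemma L_diff: assumes "v \<in> L" "w \<in> L" shows "v - w \<in> L"
proof -
  have "v - w = cf (c1 v - c1 w) (c2 v - c2 w) (c3 v - c3 w)"
    using L_cases[OF assms(1)] L_cases[OF assms(2)] cf_diff by metis
  then show ?thesis by simp
qed
lemma L_neg: assumes "v \<in> L" shows "- v \<in> L"
proof -
  have "- v = cf (- c1 v) (- c2 v) (- c3 v)"
    using L_cases[OF assms(1)] cf_neg by metis
  then show ?thesis by simp
qed

lemma c_add: assumes "v \<in> L" "w \<in> L"
  shows "c1 (v+w) = c1 v + c1 w" "c2 (v+w) = c2 v + c2 w" "c3 (v+w) = c3 v + c3 w"
proof -
  have "v + w = cf (c1 v + c1 w) (c2 v + c2 w) (c3 v + c3 w)"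
    using L_cases[OF assms(1)] L_cases[OF assms(2)] cf_add by metis
  then show "c1 (v+w) = c1 v + c1 w" "c2 (v+w) = c2 v + c2 w" "c3 (v+w) = c3 v + c3 w" by simp_all
qed
lemma c_diff: assumes "v \<in> L" "w \<in> L"
  shows "c1 (v-w) = c1 v - c1 w" "c2 (v-w) = c2 v - c2 w" "c3 (v-w) = c3 v - c3 w"
proof -
  have "v - w = cf (c1 v - c1 w) (c2 v - c2 w) (c3 v - c3 w)"
    using L_cases[OF assms(1)] L_cases[OF assms(2)] cf_diff by metis
  then show "c1 (v-w) = c1 v - c1 w" "c2 (v-w) = c2 v - c2 w" "c3 (v-w) = c3 v - c3 w" by simp_all
qed
lemma c_neg: assumes "v \<in> L"
  shows "c1 (-v) = - c1 v" "c2 (-v) = - c2 v" "c3 (-v) = - c3 v"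
proof -
  have "- v = cf (- c1 v) (- c2 v) (- c3 v)"
    using L_cases[OF assms(1)] cf_neg by metis
  then show "c1 (-v) = - c1 v" "c2 (-v) = - c2 v" "c3 (-v) = - c3 v" by simp_all
qed

lemma small_zero: "x \<in> L \<Longrightarrow> norm x < 2 \<Longrightarrow> x = 0"
  using minn by force

lemma even_small_zero:
  assumes "x \<in> L" "even (c1 x)" "even (c2 x)" "even (c3 x)" "(norm x)^2 < 16"
  shows "x = 0"
proof -
  obtain i j k where ijk: "c1 x = 2*i" "c2 x = 2*j" "c3 x = 2*k" using assms(2-4) by (metis evenE)
  have "x = 2 *\<^sub>R cf i j k" using L_cases[OF assms(1)] ijk cf_scale[of 2 i j k] by simp
  moreover have "norm (cf i j k) < 2"
  proof -
    have "(norm x)^2 = 4 * (norm (cf i j k))^2" using \<open>x = _\<close> by (simp add: power2_eq_square)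
    then have "(norm (cf i j k))^2 < 2^2" using assms(5) by simp
    then show ?thesis using power2_less_imp_less by fastforce
  qed
  ultimately show ?thesis using small_zero[of "cf i j k"] by simp
qed

end

definition pxor :: "bool\<times>bool\<times>bool \<Rightarrow> bool\<times>bool\<times>bool \<Rightarrow> bool\<times>bool\<times>bool" where
  "pxor x y = (case x of (a1,a2,a3) \<Rightarrow> case y of (b1,b2,b3) \<Rightarrow> (a1\<noteq>b1, a2\<noteq>b2, a3\<noteq>b3))"

context lat begin

definition par :: "real^3 \<Rightarrow> bool\<times>bool\<times>bool" where
  "par v = (odd (c1 v), odd (c2 v), odd (c3 v))"

definition MM :: "(real^3) set" where "MM = {v\<in>L. norm v = 2}"

lemma par_neg: "v \<in> L \<Longrightarrow> par (-v) = par v"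
  unfolding par_def by (simp add: c_neg)

lemma same_par:
  assumes "v \<in> MM" "w \<in> MM" "par v = par w"
  shows "w = v \<or> w = -v"
proof -
  have vL: "v \<in> L" "w \<in> L" and n: "norm v = 2" "norm w = 2" using assms(1,2) unfolding MM_def by auto
  have pl: "(norm (v+w))^2 + (norm (v-w))^2 = 16"
  proof -
    have "(norm (v+w))^2 + (norm (v-w))^2 = 2 * ((norm v)^2 + (norm w)^2)"
      unfolding power2_norm_eq_inner
      by (simp add: inner_add_left inner_add_right inner_diff_left inner_diff_right inner_commute algebra_simps)
    then show ?thesis using n by simp
  qed
  have e: "odd (c1 v) = odd (c1 w)" "odd (c2 v) = odd (c2 w)" "odd (c3 v) = odd (c3 w)"
    using assms(3) unfolding par_def by auto
  show ?thesis
  proof (cases "(norm (v-w))^2 < 16")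
    case True
    have "v - w = 0"
      by (rule even_small_zero) (use True e vL L_diff c_diff in auto)
    then show ?thesis by simp
  next
    case False
    then have "(norm (v+w))^2 < 16" using pl by (smt (verit) zero_le_power2)
    then have "v + w = 0"
      by (intro even_small_zero) (use e vL L_add c_add in auto)
    then show ?thesis by (simp add: eq_neg_iff_add_eq_0 add.commute)
  qed
qed

lemma xor_par:
  assumes "v1 \<in> MM" "v2 \<in> MM" "v3 \<in> MM" "par v3 = pxor (par v1) (par v2)"
  shows "\<exists>e1 e2. (e1 = 1 \<or> e1 = -1) \<and> (e2 = 1 \<or> e2 = (-1::real)) \<and> v3 = e1 *\<^sub>R v1 + e2 *\<^sub>R v2"
proof -
  have vL: "v1 \<in> L" "v2 \<in> L" "v3 \<in> L" and n: "norm v1 = 2" "norm v2 = 2" "norm v3 = 2"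
    using assms(1-3) unfolding MM_def by auto
  have e: "odd (c1 v3) = (odd (c1 v1) \<noteq> odd (c1 v2))" "odd (c2 v3) = (odd (c2 v1) \<noteq> odd (c2 v2))"
          "odd (c3 v3) = (odd (c3 v1) \<noteq> odd (c3 v2))"
    using assms(4) unfolding par_def pxor_def by auto
  define a where "a = v3 - v1 - v2"
  define b where "b = v3 - v1 + v2"
  define c where "c = v3 + v1 - v2"
  define d where "d = v3 + v1 + v2"
  have abcd: "a \<in> L" "b \<in> L" "c \<in> L" "d \<in> L" unfolding a_def b_def c_def d_def
    using vL by (simp_all add: L_add L_diff)
  have ca: "c1 a = c1 v3 - c1 v1 - c1 v2" "c2 a = c2 v3 - c2 v1 - c2 v2" "c3 a = c3 v3 - c3 v1 - c3 v2"
    unfolding a_def using vL by (simp_all add: c_diff L_diff)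
  have cb: "c1 b = c1 v3 - c1 v1 + c1 v2" "c2 b = c2 v3 - c2 v1 + c2 v2" "c3 b = c3 v3 - c3 v1 + c3 v2"
    unfolding b_def using vL by (simp_all add: c_diff c_add L_diff)
  have cc: "c1 c = c1 v3 + c1 v1 - c1 v2" "c2 c = c2 v3 + c2 v1 - c2 v2" "c3 c = c3 v3 + c3 v1 - c3 v2"
    unfolding c_def using vL by (simp_all add: c_diff c_add L_add)
  have cd: "c1 d = c1 v3 + c1 v1 + c1 v2" "c2 d = c2 v3 + c2 v1 + c2 v2" "c3 d = c3 v3 + c3 v1 + c3 v2"
    unfolding d_def using vL by (simp_all add: c_add L_add)
  have sq: "(norm a)^2 + (norm b)^2 + (norm c)^2 + (norm d)^2 = 48"
  proof -
    have "(norm a)^2 + (norm b)^2 + (norm c)^2 + (norm d)^2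
          = 4 * ((norm v1)^2 + (norm v2)^2 + (norm v3)^2)"
      unfolding a_def b_def c_def d_def power2_norm_eq_inner
      by (simp add: inner_add_left inner_add_right inner_diff_left inner_diff_right inner_commute algebra_simps)
    then show ?thesis using n by simp
  qed
  consider "(norm a)^2 < 16" | "(norm b)^2 < 16" | "(norm c)^2 < 16" | "(norm d)^2 < 16"
    using sq by (smt (verit) zero_le_power2)
  then show ?thesis
  proof cases
    case 1 then have "a = 0" by (intro even_small_zero) (use abcd ca e in auto)
    moreover have "v3 = a + v1 + v2" unfolding a_def by simp
    ultimately show ?thesis by (intro exI[of _ 1] exI[of _ 1]) simp
  next
    case 2 then have "b = 0" by (intro even_small_zero) (use abcd cb e in auto)
    moreover have "v3 = b + v1 - v2" unfolding b_def by simp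
    ultimately show ?thesis by (intro exI[of _ 1] exI[of _ "-1"]) simp
  next
    case 3 then have "c = 0" by (intro even_small_zero) (use abcd cc e in auto)
    moreover have "v3 = c - v1 + v2" unfolding c_def by simp
    ultimately show ?thesis by (intro exI[of _ "-1"] exI[of _ 1]) simp
  next
    case 4 then have "d = 0" by (intro even_small_zero) (use abcd cd e in auto)
    moreover have "v3 = d - v1 - v2" unfolding d_def by simp
    ultimately show ?thesis by (intro exI[of _ "-1"] exI[of _ "-1"]) simp
  qed
qed

end

lemma pm_sq: "e = 1 \<or> e = -1 \<Longrightarrow> e * e = (1::real)" by auto

lemma ip_sq:
  fixes u w :: "real^3"
  assumes "norm u = 2" "norm w = 2" "norm (e1 *\<^sub>R u + e2 *\<^sub>R w) = 2"
    "e1 = 1 \<or> e1 = -1" "e2 = 1 \<or> e2 = -1"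
  shows "e1 * e2 * inner u w = -2"
proof -
  have "(norm (e1 *\<^sub>R u + e2 *\<^sub>R w))^2 = (e1*e1) * (norm u)^2 + (e2*e2) * (norm w)^2 + 2 * e1 * e2 * inner u w"
    unfolding power2_norm_eq_inner
    by (simp add: inner_add_left inner_add_right inner_commute algebra_simps)
  then show ?thesis using assms pm_sq[OF assms(4)] pm_sq[OF assms(5)] by simp
qed

lemma three_pm: "(x::real)^2 = 4 \<Longrightarrow> y^2 = 4 \<Longrightarrow> z^2 = 4 \<Longrightarrow> x + y + z \<noteq> -4"
proof -
  assume "x^2 = 4" "y^2 = 4" "z^2 = 4"
  then have "x = 2 \<or> x = -2" "y = 2 \<or> y = -2" "z = 2 \<or> z = -2"
    using power2_eq_iff[of x 2] power2_eq_iff[of y 2] power2_eq_iff[of z 2] by auto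
  then show ?thesis by auto
qed

context lat begin

lemma MM_norm: "v \<in> MM \<Longrightarrow> norm v = 2" unfolding MM_def by auto

lemma no7: "\<not> (\<forall>c. c \<noteq> (False,False,False) \<longrightarrow> (\<exists>v\<in>MM. par v = c))"
proof
  assume H: "\<forall>c. c \<noteq> (False,False,False) \<longrightarrow> (\<exists>v\<in>MM. par v = c)"
  obtain va where va: "va \<in> MM" "par va = (True,False,False)" using H by blast
  obtain vb where vb: "vb \<in> MM" "par vb = (False,True,False)" using H by blast
  obtain vc where vc: "vc \<in> MM" "par vc = (False,False,True)" using H by blast
  obtain vab where vab: "vab \<in> MM" "par vab = (True,True,False)" using H by blast
  obtain vac where vac: "vac \<in> MM" "par vac = (True,False,True)" using H by blast
  obtain vbc where vbc: "vbc \<in> MM" "par vbc = (False,True,True)" using H by blast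
  obtain vabc where vabc: "vabc \<in> MM" "par vabc = (True,True,True)" using H by blast
  have sq: "(inner u w)^2 = 4" if hh: "u \<in> MM" "w \<in> MM" "x \<in> MM" "par x = pxor (par u) (par w)" for u w x
  proof -
    obtain e1 e2 where e: "e1 = 1 \<or> e1 = -1" "e2 = 1 \<or> e2 = (-1::real)" "x = e1 *\<^sub>R u + e2 *\<^sub>R w"
      using xor_par[OF hh] by blast
    have "e1 * e2 * inner u w = -2"
      using ip_sq[of u w e1 e2] e MM_norm hh by simp
    then have X: "(e1 * e2 * inner u w)^2 = 4" by simp
    have "(e1*e1) * (e2*e2) * (inner u w)^2 = (e1 * e2 * inner u w)^2"
      by (simp add: power2_eq_square algebra_simps)
    with X have "(e1*e1) * (e2*e2) * (inner u w)^2 = 4" by simp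
    then show ?thesis using pm_sq[OF e(1)] pm_sq[OF e(2)] by simp
  qed
  have ab: "(inner va vb)^2 = 4" by (rule sq[OF va(1) vb(1) vab(1)]) (simp add: va vb vab pxor_def)
  have ac: "(inner va vc)^2 = 4" by (rule sq[OF va(1) vc(1) vac(1)]) (simp add: va vc vac pxor_def)
  have bc: "(inner vb vc)^2 = 4" by (rule sq[OF vb(1) vc(1) vbc(1)]) (simp add: vb vc vbc pxor_def)
  obtain e1 e2 where e: "e1 = 1 \<or> e1 = -1" "e2 = 1 \<or> e2 = (-1::real)" "vab = e1 *\<^sub>R va + e2 *\<^sub>R vb"
    using xor_par[OF va(1) vb(1) vab(1)] by (auto simp: va vb vab pxor_def)
  obtain f1 f2 where f: "f1 = 1 \<or> f1 = -1" "f2 = 1 \<or> f2 = (-1::real)" "vabc = f1 *\<^sub>R vab + f2 *\<^sub>R vc"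
    using xor_par[OF vab(1) vc(1) vabc(1)] by (auto simp: vc vab vabc pxor_def)
  define d1 where "d1 = f1 * e1"
  define d2 where "d2 = f1 * e2"
  define d3 where "d3 = f2"
  have dd: "d1*d1 = 1" "d2*d2 = 1" "d3*d3 = 1" unfolding d1_def d2_def d3_def
    using pm_sq[OF e(1)] pm_sq[OF e(2)] pm_sq[OF f(1)] pm_sq[OF f(2)]
    by (simp_all add: algebra_simps)
  have vv: "vabc = d1 *\<^sub>R va + d2 *\<^sub>R vb + d3 *\<^sub>R vc"
    unfolding d1_def d2_def d3_def f(3) e(3) by (simp add: algebra_simps)
  have "(norm vabc)^2 = (d1*d1) * (norm va)^2 + (d2*d2) * (norm vb)^2 + (d3*d3) * (norm vc)^2
     + 2 * ((d1*d2) * inner va vb + (d1*d3) * inner va vc + (d2*d3) * inner vb vc)"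
    unfolding vv power2_norm_eq_inner
    by (simp add: inner_add_left inner_add_right inner_commute algebra_simps)
  then have "(d1*d2) * inner va vb + (d1*d3) * inner va vc + (d2*d3) * inner vb vc = -4"
    using dd MM_norm[OF va(1)] MM_norm[OF vb(1)] MM_norm[OF vc(1)] MM_norm[OF vabc(1)] by simp
  moreover have "((d1*d2) * inner va vb)^2 = 4" "((d1*d3) * inner va vc)^2 = 4" "((d2*d3) * inner vb vc)^2 = 4"
    using ab ac bc dd by (simp_all add: power_mult_distrib power2_eq_square algebra_simps)
  ultimately show False using three_pm by blast
qed

end

fun bdet :: "bool\<times>bool\<times>bool \<Rightarrow> bool\<times>bool\<times>bool \<Rightarrow> bool\<times>bool\<times>bool \<Rightarrow> bool" where
  "bdet (a1,a2,a3) (b1,b2,b3) (c1,c2,c3) =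
    (((a1 \<and> ((b2\<and>c3) \<noteq> (b3\<and>c2))) \<noteq> (a2 \<and> ((b1\<and>c3) \<noteq> (b3\<and>c1)))) \<noteq> (a3 \<and> ((b1\<and>c2) \<noteq> (b2\<and>c1))))"

lemma odd_zdet: "odd (zdet a1 a2 a3 b1 b2 b3 c1 c2 c3) \<longleftrightarrow>
   bdet (odd a1, odd a2, odd a3) (odd b1, odd b2, odd b3) (odd c1, odd c2, odd c3)"
  unfolding zdet_def by auto

context lat begin

lemma det3_perm: "det3 b1 b3 b2 = - det3 b1 b2 b3" "det3 b2 b1 b3 = - det3 b1 b2 b3"
  "det3 b2 b3 b1 = det3 b1 b2 b3" "det3 b3 b1 b2 = det3 b1 b2 b3" "det3 b3 b2 b1 = - det3 b1 b2 b3"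
  unfolding det3_def by (simp_all add: algebra_simps)

lemma det3_cf: "det3 (cf a1 a2 a3) (cf d1 d2 d3) (cf e1 e2 e3) = of_int (zdet a1 a2 a3 d1 d2 d3 e1 e2 e3) * det3 b1 b2 b3"
  unfolding cf_def by (simp add: det3_lin det3_same det3_perm zdet_def algebra_simps)

lemma det_nz:
  assumes "v1 \<in> L" "v2 \<in> L" "v3 \<in> L" "bdet (par v1) (par v2) (par v3)"
  shows "det3 v1 v2 v3 \<noteq> 0"
proof -
  let ?z = "zdet (c1 v1) (c2 v1) (c3 v1) (c1 v2) (c2 v2) (c3 v2) (c1 v3) (c2 v3) (c3 v3)"
  have "det3 v1 v2 v3 = of_int ?z * det3 b1 b2 b3"
    using det3_cf L_cases assms(1-3) by metis
  moreover have "odd ?z" using assms(4) unfolding odd_zdet par_def .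
  then have "?z \<noteq> 0" by auto
  ultimately show ?thesis using Dnz by simp
qed

end

lemma card_UNIV_b3: "card (UNIV :: (bool\<times>bool\<times>bool) set) = 8"
  by (simp add: UNIV_Times_UNIV[symmetric] card_cartesian_product del: UNIV_Times_UNIV)

definition six_ok :: "bool\<times>bool\<times>bool \<Rightarrow> bool" where
 "six_ok p \<longleftrightarrow> (\<exists>x1 x2 x3 y1 y2 y3. distinct [x1,x2,x3,y1,y2,y3] \<and>
     (\<forall>v\<in>set [x1,x2,x3,y1,y2,y3]. v \<noteq> (False,False,False) \<and> v \<noteq> p) \<and>
     bdet x1 x2 x3 \<and> bdet y1 y2 y3)"

lemma six0: "six_ok (False,False,True)"
  unfolding six_ok_def
  apply (rule exI[of _ "(False,True,False)"]) apply (rule exI[of _ "(False,True,True)"]) apply (rule exI[of _ "(True,False,False)"]) apply (rule exI[of _ "(True,False,True)"]) apply (rule exI[of _ "(True,True,False)"]) apply (rule exI[of _ "(True,True,True)"])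
  by simp

lemma six1: "six_ok (False,True,False)"
  unfolding six_ok_def
  apply (rule exI[of _ "(False,False,True)"]) apply (rule exI[of _ "(False,True,True)"]) apply (rule exI[of _ "(True,False,False)"]) apply (rule exI[of _ "(True,False,True)"]) apply (rule exI[of _ "(True,True,False)"]) apply (rule exI[of _ "(True,True,True)"])
  by simp

lemma six2: "six_ok (False,True,True)"
  unfolding six_ok_def
  apply (rule exI[of _ "(False,False,True)"]) apply (rule exI[of _ "(False,True,False)"]) apply (rule exI[of _ "(True,False,False)"]) apply (rule exI[of _ "(True,False,True)"]) apply (rule exI[of _ "(True,True,False)"]) apply (rule exI[of _ "(True,True,True)"])
  by simp

lemma six3: "six_ok (True,False,False)"
  unfolding six_ok_def
  apply (rule exI[of _ "(False,False,True)"]) apply (rule exI[of _ "(False,True,False)"]) apply (rule exI[of _ "(True,False,True)"]) apply (rule exI[of _ "(False,True,True)"]) apply (rule exI[of _ "(True,True,False)"]) apply (rule exI[of _ "(True,True,True)"])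
  by simp

lemma six4: "six_ok (True,False,True)"
  unfolding six_ok_def
  apply (rule exI[of _ "(False,False,True)"]) apply (rule exI[of _ "(False,True,False)"]) apply (rule exI[of _ "(True,False,False)"]) apply (rule exI[of _ "(False,True,True)"]) apply (rule exI[of _ "(True,True,False)"]) apply (rule exI[of _ "(True,True,True)"])
  by simp

lemma six5: "six_ok (True,True,False)"
  unfolding six_ok_def
  apply (rule exI[of _ "(False,False,True)"]) apply (rule exI[of _ "(False,True,False)"]) apply (rule exI[of _ "(True,False,False)"]) apply (rule exI[of _ "(False,True,True)"]) apply (rule exI[of _ "(True,False,True)"]) apply (rule exI[of _ "(True,True,True)"])
  by simp

lemma six6: "six_ok (True,True,True)"
  unfolding six_ok_def
  apply (rule exI[of _ "(False,False,True)"]) apply (rule exI[of _ "(False,True,False)"]) apply (rule exI[of _ "(True,False,True)"]) apply (rule exI[of _ "(False,True,True)"]) apply (rule exI[of _ "(True,False,False)"]) apply (rule exI[of _ "(True,True,False)"])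
  by simp

lemma six_aux:
  assumes "p \<noteq> (False,False,False)"
  shows "six_ok p"
proof -
  obtain a b c where p: "p = (a,b,c)" by (cases p) auto
  show ?thesis using assms unfolding p by (cases a; cases b; cases c) (simp_all add: six0 six1 six2 six3 six4 six5 six6)
qed

lemma tri_key:
  fixes x y z :: "bool\<times>bool\<times>bool"
  assumes "x \<noteq> (False,False,False)" "y \<noteq> (False,False,False)" "z \<noteq> (False,False,False)"
    "x \<noteq> y" "z \<noteq> x" "z \<noteq> y" "z \<noteq> pxor x y"
  shows "bdet x y z"
proof -
  obtain x1 x2 x3 where x: "x = (x1,x2,x3)" by (cases x) auto
  obtain y1 y2 y3 where y: "y = (y1,y2,y3)" by (cases y) auto
  obtain z1 z2 z3 where z: "z = (z1,z2,z3)" by (cases z) auto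
  show ?thesis using assms unfolding x y z pxor_def
    by (cases x1; cases x2; cases x3; cases y1; cases y2; cases y3; cases z1; cases z2; cases z3) simp_all
qed

lemma card3le: "card {a,b,c} \<le> 3"
proof -
  have "card {a,b,c} \<le> Suc (card {b,c})" by (rule card_insert_le_m1) auto
  moreover have "card {b,c} \<le> Suc (card {c})" by (rule card_insert_le_m1) auto
  ultimately show ?thesis by simp
qed

lemma tri4:
  fixes K :: "(bool\<times>bool\<times>bool) set"
  assumes "(False,False,False) \<notin> K" "card K \<ge> 4"
  shows "\<exists>x\<in>K. \<exists>y\<in>K. \<exists>z\<in>K. x \<noteq> y \<and> y \<noteq> z \<and> x \<noteq> z \<and> bdet x y z"
proof -
  have "K \<noteq> {}" using assms(2) by auto
  then obtain x where x: "x \<in> K" by auto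
  have "card (K - {x}) \<ge> 3" using assms(2) x by (simp add: card_Diff_singleton)
  then have "card (K - {x}) > 0" by linarith
  then have "K - {x} \<noteq> {}" using card_gt_0_iff by blast
  then obtain y where y: "y \<in> K" "y \<noteq> x" by auto
  have "card K - card {x,y,pxor x y} \<le> card (K - {x,y,pxor x y})"
    by (rule diff_card_le_card_Diff) simp
  moreover have "card {x,y,pxor x y} \<le> 3" by (rule card3le)
  ultimately have "card (K - {x,y,pxor x y}) \<ge> 1" using assms(2) by linarith
  then have "card (K - {x,y,pxor x y}) > 0" by linarith
  then have "K - {x,y,pxor x y} \<noteq> {}" using card_gt_0_iff by blast
  then obtain z where z: "z \<in> K" "z \<notin> {x,y,pxor x y}" by blast
  have "bdet x y z"
  proof (rule tri_key)
    show "x \<noteq> (False, False, False)" "y \<noteq> (False, False, False)" "z \<noteq> (False, False, False)"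
      using assms(1) x y z by metis+
    show "x \<noteq> y" "z \<noteq> x" "z \<noteq> y" "z \<noteq> pxor x y" using y z by simp_all
  qed
  moreover have "x \<noteq> y" "y \<noteq> z" "x \<noteq> z" using y z by (simp_all add: eq_commute)
  ultimately show ?thesis using x y(1) z(1) by meson
qed

lemma card_fibres:
  assumes "finite A"
  shows "card A = (\<Sum>z\<in>f ` A. card {a\<in>A. f a = z})"
proof -
  have "A = (\<Union>z\<in>f ` A. {a\<in>A. f a = z})" by auto
  then have "card A = card (\<Union>z\<in>f ` A. {a\<in>A. f a = z})" by simp
  also have "\<dots> = (\<Sum>z\<in>f ` A. card {a\<in>A. f a = z})"
    by (rule card_UN_disjoint) (use assms in auto)
  finally show ?thesis .
qed

lemma LW:
  fixes Q :: "('a \<times> 'b \<times> 'c) set"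
  assumes fin: "finite Q"
  shows "real (card Q)^2 \<le> real (card ((\<lambda>(a,b,c). (b,c)) ` Q)) * real (card ((\<lambda>(a,b,c). (a,c)) ` Q))
          * real (card ((\<lambda>(a,b,c). (a,b)) ` Q))"
proof -
  define Z where "Z = (\<lambda>q. snd (snd q)) ` Q"
  define S where "S z = {q\<in>Q. snd (snd q) = z}" for z
  define A where "A z = fst ` S z" for z
  define B where "B z = (\<lambda>q. fst (snd q)) ` S z" for z
  define N1 where "N1 = card ((\<lambda>(a,b,c). (b,c)) ` Q)"
  define N2 where "N2 = card ((\<lambda>(a,b,c). (a,c)) ` Q)"
  define N3 where "N3 = card ((\<lambda>(a,b,c). (a,b)) ` Q)"
  have finZ: "finite Z" unfolding Z_def using fin by simp
  have finS: "finite (S z)" for z unfolding S_def using fin by simp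
  have cQ: "card Q = (\<Sum>z\<in>Z. card (S z))"
    unfolding Z_def S_def by (rule card_fibres[OF fin])
  have m1: "card (S z) \<le> card (A z) * card (B z)" for z
  proof -
    have "inj_on (\<lambda>q. (fst q, fst (snd q))) (S z)"
      unfolding S_def inj_on_def by auto
    moreover have "(\<lambda>q. (fst q, fst (snd q))) ` S z \<subseteq> A z \<times> B z"
      unfolding A_def B_def by auto
    moreover have "finite (A z \<times> B z)" unfolding A_def B_def using finS by simp
    ultimately have "card (S z) \<le> card (A z \<times> B z)"
      by (rule card_inj_on_le)
    then show ?thesis by (simp add: card_cartesian_product)
  qed
  have m2: "card (S z) \<le> N3" for z
  proof -
    have "inj_on (\<lambda>(a,b,c). (a,b)) (S z)"
      unfolding S_def inj_on_def by auto
    moreover have "(\<lambda>(a,b,c). (a,b)) ` S z \<subseteq> (\<lambda>(a,b,c). (a,b)) ` Q"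
      unfolding S_def by (auto intro: rev_image_eqI)
    moreover have "finite ((\<lambda>(a,b,c). (a,b)) ` Q)" using fin by simp
    ultimately show ?thesis unfolding N3_def by (rule card_inj_on_le)
  qed
  have cN2: "N2 = (\<Sum>z\<in>Z. card (A z))"
  proof -
    let ?P = "(\<lambda>(a,b,c). (a,c)) ` Q"
    have fP: "finite ?P" using fin by simp
    have sz: "snd ` ?P = Z" unfolding Z_def by (simp add: image_image case_prod_beta)
    have "N2 = (\<Sum>z\<in>Z. card {p\<in>?P. snd p = z})" unfolding N2_def sz[symmetric] by (rule card_fibres[OF fP])
    also have "\<dots> = (\<Sum>z\<in>Z. card (A z))"
    proof (rule sum.cong[OF refl])
      fix z
      have "{p\<in>?P. snd p = z} = (\<lambda>a. (a,z)) ` A z"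
      proof (intro set_eqI iffI)
        fix p assume "p \<in> {p\<in>?P. snd p = z}"
        then obtain a b c where abc: "(a,b,c) \<in> Q" "p = (a,c)" "snd p = z" by auto
        then have "(a,b,c) \<in> S z" unfolding S_def by simp
        then have "(\<lambda>q. fst q) (a,b,c) \<in> A z" unfolding A_def by (rule imageI)
        then show "p \<in> (\<lambda>a. (a,z)) ` A z" using abc by (auto intro: rev_image_eqI)
      next
        fix p assume "p \<in> (\<lambda>a. (a,z)) ` A z"
        then obtain q where q: "q \<in> S z" "p = (fst q, z)" unfolding A_def by auto
        obtain a b c where "q = (a,b,c)" by (cases q) auto
        with q show "p \<in> {p\<in>?P. snd p = z}" unfolding S_def by (auto intro: rev_image_eqI)
      qed
      also have "card ((\<lambda>a. (a,z)) ` A z) = card (A z)"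
        by (rule card_image) (auto simp: inj_on_def)
      finally show "card {p\<in>?P. snd p = z} = card (A z)" .
    qed
    finally show ?thesis .
  qed
  have cN1: "N1 = (\<Sum>z\<in>Z. card (B z))"
  proof -
    let ?P = "(\<lambda>(a,b,c). (b,c)) ` Q"
    have fP: "finite ?P" using fin by simp
    have sz: "snd ` ?P = Z" unfolding Z_def by (simp add: image_image case_prod_beta)
    have "N1 = (\<Sum>z\<in>Z. card {p\<in>?P. snd p = z})" unfolding N1_def sz[symmetric] by (rule card_fibres[OF fP])
    also have "\<dots> = (\<Sum>z\<in>Z. card (B z))"
    proof (rule sum.cong[OF refl])
      fix z
      have "{p\<in>?P. snd p = z} = (\<lambda>a. (a,z)) ` B z"
      proof (intro set_eqI iffI)
        fix p assume "p \<in> {p\<in>?P. snd p = z}"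
        then obtain a b c where abc: "(a,b,c) \<in> Q" "p = (b,c)" "snd p = z" by auto
        then have "(a,b,c) \<in> S z" unfolding S_def by simp
        then have "(\<lambda>q. fst (snd q)) (a,b,c) \<in> B z" unfolding B_def by (rule imageI)
        then show "p \<in> (\<lambda>a. (a,z)) ` B z" using abc by (auto intro: rev_image_eqI)
      next
        fix p assume "p \<in> (\<lambda>a. (a,z)) ` B z"
        then obtain q where q: "q \<in> S z" "p = (fst (snd q), z)" unfolding B_def by auto
        obtain a b c where "q = (a,b,c)" by (cases q) auto
        with q show "p \<in> {p\<in>?P. snd p = z}" unfolding S_def by (auto intro: rev_image_eqI)
      qed
      also have "card ((\<lambda>a. (a,z)) ` B z) = card (B z)"
        by (rule card_image) (auto simp: inj_on_def)
      finally show "card {p\<in>?P. snd p = z} = card (B z)" .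
    qed
    finally show ?thesis .
  qed
  have key: "real (card (S z)) \<le> sqrt (real N3) * (sqrt (real (card (A z))) * sqrt (real (card (B z))))" for z
  proof -
    have a: "real (card (S z)) \<le> real N3" using m2[of z] by simp
    have b: "real (card (S z)) \<le> real (card (A z)) * real (card (B z))"
      using m1[of z] by (metis of_nat_le_iff of_nat_mult)
    have "real (card (S z)) * real (card (S z)) \<le> real N3 * (real (card (A z)) * real (card (B z)))"
      by (rule mult_mono[OF a b]) simp_all
    then have "(real (card (S z)))^2 \<le> real N3 * (real (card (A z)) * real (card (B z)))"
      by (simp add: power2_eq_square)
    then have "real (card (S z)) \<le> sqrt (real N3 * (real (card (A z)) * real (card (B z))))"
      by (rule real_le_rsqrt)
    then show ?thesis by (simp add: real_sqrt_mult)
  qed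
  have cs: "(\<Sum>z\<in>Z. sqrt (real (card (A z))) * sqrt (real (card (B z)))) \<le> sqrt (real N2) * sqrt (real N1)"
  proof -
    have "(\<Sum>z\<in>Z. sqrt (real (card (A z))) * sqrt (real (card (B z))))^2
       \<le> (\<Sum>z\<in>Z. (sqrt (real (card (A z))))^2) * (\<Sum>z\<in>Z. (sqrt (real (card (B z))))^2)"
      by (rule Cauchy_Schwarz_ineq_sum)
    also have "\<dots> = real N2 * real N1" unfolding cN1 cN2 by simp
    finally have "(\<Sum>z\<in>Z. sqrt (real (card (A z))) * sqrt (real (card (B z))))^2 \<le> real N2 * real N1" .
    then have "(\<Sum>z\<in>Z. sqrt (real (card (A z))) * sqrt (real (card (B z)))) \<le> sqrt (real N2 * real N1)"
      by (rule real_le_rsqrt)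
    then show ?thesis by (simp add: real_sqrt_mult)
  qed
  have "real (card Q) \<le> (\<Sum>z\<in>Z. sqrt (real N3) * (sqrt (real (card (A z))) * sqrt (real (card (B z)))))"
    unfolding cQ of_nat_sum by (rule sum_mono) (rule key)
  also have "\<dots> = sqrt (real N3) * (\<Sum>z\<in>Z. sqrt (real (card (A z))) * sqrt (real (card (B z))))"
    by (simp add: sum_distrib_left)
  also have "\<dots> \<le> sqrt (real N3) * (sqrt (real N2) * sqrt (real N1))"
    by (rule mult_left_mono[OF cs]) simp
  also have "\<dots> = sqrt (real N1 * real N2 * real N3)"
    by (simp add: real_sqrt_mult mult_ac)
  finally have le: "real (card Q) \<le> sqrt (real N1 * real N2 * real N3)" .
  have "(real (card Q))^2 \<le> (sqrt (real N1 * real N2 * real N3))^2"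
    by (rule power_mono[OF le]) simp
  then have "real (card Q)^2 \<le> real N1 * real N2 * real N3" by simp
  then show ?thesis unfolding N1_def N2_def N3_def .
qed

lemma ends:
  fixes P :: "'v::ab_group_add set" and g :: "'v \<Rightarrow> real"
  assumes fin: "finite P" and g: "\<And>x. g (x + s) = g x + 1" and h: "\<And>x. h (x + s) = h x"
  shows "card (h ` P) \<le> card {x\<in>P. x + s \<notin> P}"
proof -
  let ?E = "{x\<in>P. x + s \<notin> P}"
  have "h ` P \<subseteq> h ` ?E"
  proof
    fix u assume "u \<in> h ` P"
    then obtain x where x: "x \<in> P" "u = h x" by auto
    let ?S = "{y\<in>P. h y = h x}"
    have fS: "finite ?S" using fin by simp
    have neS: "?S \<noteq> {}" using x by auto
    have "Max (g ` ?S) \<in> g ` ?S" using fS neS by simp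
    then obtain y where y: "y \<in> ?S" "g y = Max (g ` ?S)" by auto
    have "y + s \<notin> P"
    proof
      assume "y + s \<in> P"
      then have "y + s \<in> ?S" using y h by simp
      then have "g (y + s) \<le> Max (g ` ?S)" using fS by simp
      then show False using y g by simp
    qed
    then have "y \<in> ?E" using y by simp
    then have "h y \<in> h ` ?E" by (rule imageI)
    then show "u \<in> h ` ?E" using x y by simp
  qed
  then have "card (h ` P) \<le> card (h ` ?E)" by (rule card_mono[rotated]) (use fin in simp)
  also have "\<dots> \<le> card ?E" by (rule card_image_le) (use fin in simp)
  finally show ?thesis .
qed

definition ee :: "(real^3) set \<Rightarrow> real^3 \<Rightarrow> nat" where
  "ee P s = card {x\<in>P. x + s \<notin> P}"

lemma LW_lattice:
  assumes fin: "finite P" and D: "det3 s1 s2 s3 \<noteq> 0"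
  shows "real (card P)^2 \<le> real (ee P s1) * real (ee P s2) * real (ee P s3)"
proof -
  define D where "D = det3 s1 s2 s3"
  define f1 where "f1 x = det3 x s2 s3 / D" for x
  define f2 where "f2 x = det3 s1 x s3 / D" for x
  define f3 where "f3 x = det3 s1 s2 x / D" for x
  define \<phi> where "\<phi> x = (f1 x, f2 x, f3 x)" for x
  have Dnz: "D \<noteq> 0" using D unfolding D_def .
  have inj: "inj \<phi>"
  proof (rule injI)
    fix x y assume "\<phi> x = \<phi> y"
    then have "det3 x s2 s3 = det3 y s2 s3" "det3 s1 x s3 = det3 s1 y s3" "det3 s1 s2 x = det3 s1 s2 y"
      unfolding \<phi>_def f1_def f2_def f3_def using Dnz by auto
    then have "D *\<^sub>R x = D *\<^sub>R y" unfolding D_def using det3_expand[of s1 s2 s3 x] det3_expand[of s1 s2 s3 y] by simp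
    then show "x = y" using Dnz by simp
  qed
  let ?Q = "\<phi> ` P"
  have cQ: "card ?Q = card P" by (rule card_image) (rule inj_on_subset[OF inj], simp)
  have lw: "real (card ?Q)^2 \<le> real (card ((\<lambda>(a,b,c). (b,c)) ` ?Q)) * real (card ((\<lambda>(a,b,c). (a,c)) ` ?Q))
          * real (card ((\<lambda>(a,b,c). (a,b)) ` ?Q))"
    by (rule LW) (use fin in simp)
  have i1: "(\<lambda>(a,b,c). (b,c)) ` ?Q = (\<lambda>x. (f2 x, f3 x)) ` P" unfolding \<phi>_def by (simp add: image_image)
  have i2: "(\<lambda>(a,b,c). (a,c)) ` ?Q = (\<lambda>x. (f1 x, f3 x)) ` P" unfolding \<phi>_def by (simp add: image_image)
  have i3: "(\<lambda>(a,b,c). (a,b)) ` ?Q = (\<lambda>x. (f1 x, f2 x)) ` P" unfolding \<phi>_def by (simp add: image_image)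
  have e1: "card ((\<lambda>x. (f2 x, f3 x)) ` P) \<le> ee P s1" unfolding ee_def
    by (rule ends[OF fin, where g = f1]) (simp_all add: f1_def f2_def f3_def det3_lin det3_same D_def[symmetric] Dnz add_divide_distrib)
  have e2: "card ((\<lambda>x. (f1 x, f3 x)) ` P) \<le> ee P s2" unfolding ee_def
    by (rule ends[OF fin, where g = f2]) (simp_all add: f1_def f2_def f3_def det3_lin det3_same D_def[symmetric] Dnz add_divide_distrib)
  have e3: "card ((\<lambda>x. (f1 x, f2 x)) ` P) \<le> ee P s3" unfolding ee_def
    by (rule ends[OF fin, where g = f3]) (simp_all add: f1_def f2_def f3_def det3_lin det3_same D_def[symmetric] Dnz add_divide_distrib)
  have "real (card P)^2 \<le> real (card ((\<lambda>x. (f2 x, f3 x)) ` P)) * real (card ((\<lambda>x. (f1 x, f3 x)) ` P))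
          * real (card ((\<lambda>x. (f1 x, f2 x)) ` P))" using lw unfolding cQ i1 i2 i3 .
  also have "\<dots> \<le> real (ee P s1) * real (ee P s2) * real (ee P s3)"
    using e1 e2 e3 by (intro mult_mono) simp_all
  finally show ?thesis .
qed

lemma amgm3:
  fixes a b c :: real
  assumes "a \<ge> 0" "b \<ge> 0" "c \<ge> 0"
  shows "27 * (a*b*c) \<le> (a+b+c)^3"
proof -
  have eq: "2 * ((a+b+c)^3 - 27*(a*b*c)) = (a+b+c) * ((a-b)^2 + (b-c)^2 + (c-a)^2)
      + 6 * (a*(b-c)^2 + b*(c-a)^2 + c*(a-b)^2)"
    by (simp add: power2_eq_square power3_eq_cube algebra_simps)
  have "0 \<le> (a+b+c) * ((a-b)^2 + (b-c)^2 + (c-a)^2)" using assms by simp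
  moreover have "0 \<le> 6 * (a*(b-c)^2 + b*(c-a)^2 + c*(a-b)^2)" using assms by simp
  ultimately have "0 \<le> 2 * ((a+b+c)^3 - 27*(a*b*c))" unfolding eq by (rule add_nonneg_nonneg)
  then show ?thesis by simp
qed

lemma cube_powr_gen: assumes "(x::real) > 0" shows "(x powr a)^3 = x powr (3*a)"
proof -
  have "(x powr a)^3 = (x powr a) powr (real 3)" by (subst powr_realpow) (use assms in auto)
  also have "\<dots> = x powr (a * real 3)" by (rule powr_powr)
  finally show ?thesis by (simp add: mult.commute)
qed

lemma cube_powr: assumes "(x::real) > 0" shows "(x powr (1/3))^3 = x"
  using cube_powr_gen[OF assms, of "1/3"] assms by simp

lemma amgm_lw:
  fixes a b c n :: real
  assumes "a \<ge> 0" "b \<ge> 0" "c \<ge> 0" "n > 0" "n^2 \<le> a*b*c"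
  shows "3 * n powr (2/3) \<le> a + b + c"
proof (rule ccontr)
  assume "\<not> ?thesis"
  then have lt: "a + b + c < 3 * n powr (2/3)" by simp
  have "(a+b+c)^3 < (3 * n powr (2/3))^3"
    by (rule power_strict_mono[OF lt]) (use assms in simp_all)
  also have "(3 * n powr (2/3))^3 = 27 * n^2"
  proof -
    have "(n powr (2/3))^3 = n powr 2" using cube_powr_gen[OF assms(4), of "2/3"] by simp
    also have "\<dots> = n^2" using assms(4) by (simp add: powr_realpow)
    finally have "(n powr (2/3))^3 = n^2" .
    then show ?thesis by (simp add: power_mult_distrib)
  qed
  finally have "(a+b+c)^3 < 27 * n^2" .
  moreover have "27 * n^2 \<le> 27 * (a*b*c)" using assms(5) by simp
  ultimately show False using amgm3[OF assms(1-3)] by simp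
qed

definition alpha :: real where "alpha = 3 * (18 * pi) powr (1/3) / pi"

lemma alpha_cube: "alpha^3 = 486 / pi^2"
proof -
  have "alpha^3 = 27 * ((18*pi) powr (1/3))^3 / pi^3" unfolding alpha_def
    by (simp add: power_divide power_mult_distrib)
  also have "((18*pi) powr (1/3))^3 = 18 * pi" by (rule cube_powr) simp
  finally show ?thesis by (simp add: power2_eq_square power3_eq_cube)
qed

lemma alpha_pos: "alpha > 0" unfolding alpha_def by simp

lemma alpha_cube_lt: "alpha^3 < 54"
proof -
  have "3 * 3 < pi * pi" using pi_gt3 by (intro mult_strict_mono) auto
  then have "pi^2 > 9" by (simp add: power2_eq_square)
  then have "486 / pi^2 < 486 / 9" by (intro divide_strict_left_mono) auto
  then show ?thesis unfolding alpha_cube by simp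
qed

lemma alpha_lt4: "alpha < 4"
proof -
  have "alpha^3 < 4^3" using alpha_cube_lt by simp
  then show ?thesis by (rule power_less_imp_less_base) simp
qed

lemma N_split: "(N::real) > 0 \<Longrightarrow> N = N powr (2/3) * N powr (1/3)"
  by (simp add: powr_add[symmetric])

lemma R1:
  fixes N :: real assumes "N \<ge> 2"
  shows "3 * N < 6 * N - alpha * N powr (2/3)"
proof -
  have N0: "N > 0" using assms by simp
  have "alpha < 3 * N powr (1/3)"
  proof -
    have "(3 * N powr (1/3))^3 = 27 * N" using cube_powr[OF N0] by (simp add: power_mult_distrib)
    then have "alpha^3 < (3 * N powr (1/3))^3" using alpha_cube_lt assms by simp
    then show ?thesis by (rule power_less_imp_less_base) simp
  qed
  then have "alpha * N powr (2/3) < 3 * N powr (1/3) * N powr (2/3)"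
    using N0 by (intro mult_strict_right_mono) auto
  also have "\<dots> = 3 * N" using N_split[OF N0] by (simp add: mult_ac)
  finally show ?thesis by simp
qed

lemma R2:
  fixes N :: real assumes "N \<ge> 1"
  shows "5 * N - 3 * N powr (2/3) < 6 * N - alpha * N powr (2/3)"
proof -
  have N0: "N > 0" using assms by simp
  have "N powr (2/3) \<le> N powr 1" by (rule powr_mono) (use assms in auto)
  then have le: "N powr (2/3) \<le> N" using N0 by simp
  have "(alpha - 3) * N powr (2/3) < 1 * N powr (2/3)"
    using alpha_lt4 N0 by (intro mult_strict_right_mono) auto
  then show ?thesis using le by (simp add: algebra_simps)
qed

lemma R3:
  fixes N :: real assumes "N > 0"
  shows "6 * N - 6 * N powr (2/3) < 6 * N - alpha * N powr (2/3)"
  using alpha_lt4 assms by (simp add: mult_strict_right_mono)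

lemma contact_sum:
  fixes P R :: "(real^3) set"
  assumes finP: "finite P" and finR: "finite R"
  and cover: "\<And>x y. x\<in>P \<Longrightarrow> y\<in>P \<Longrightarrow> dist x y = 2 \<Longrightarrow> y - x \<in> R \<or> x - y \<in> R"
  and anti: "\<And>s. s\<in>R \<Longrightarrow> -s \<notin> R"
  and Rn: "\<And>s. s\<in>R \<Longrightarrow> norm s = 2"
  shows "contact_number P = (\<Sum>s\<in>R. card {x\<in>P. x+s\<in>P})"
proof -
  let ?E = "{{x, y} | x y. x \<in> P \<and> y \<in> P \<and> dist x y = 2}"
  let ?S = "SIGMA s:R. {x\<in>P. x+s\<in>P}"
  let ?g = "\<lambda>(s,x). {x, x+s}"
  have "bij_betw ?g ?S ?E"
    unfolding bij_betw_def
  proof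
    show "inj_on ?g ?S"
    proof (rule inj_onI)
      fix a b assume a: "a \<in> ?S" and b: "b \<in> ?S" and eq: "?g a = ?g b"
      obtain s x where a': "a = (s,x)" by (cases a)
      obtain t y where b': "b = (t,y)" by (cases b)
      have sR: "s \<in> R" and tR: "t \<in> R" using a b a' b' by auto
      have "{x, x+s} = {y, y+t}" using eq a' b' by simp
      then have "(x = y \<and> x+s = y+t) \<or> (x = y+t \<and> x+s = y)" by (simp add: doubleton_eq_iff)
      then show "a = b"
      proof
        assume "x = y \<and> x+s = y+t" then show ?thesis using a' b' by auto
      next
        assume h: "x = y+t \<and> x+s = y"
        then have "s + t = 0" by (auto simp: algebra_simps)
        then have "s = -t" by (simp only: eq_neg_iff_add_eq_0)
        then show ?thesis using anti[OF tR] sR by simp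
      qed
    qed
  next
    show "?g ` ?S = ?E"
    proof (intro set_eqI iffI)
      fix e assume "e \<in> ?g ` ?S"
      then obtain s x where sx: "s \<in> R" "x \<in> P" "x+s \<in> P" "e = {x, x+s}" by auto
      have d: "dist x (x+s) = 2" using Rn[OF sx(1)] by (simp add: dist_norm)
      show "e \<in> ?E" unfolding mem_Collect_eq
        apply (rule exI[of _ x]) apply (rule exI[of _ "x+s"]) using sx d by simp
    next
      fix e assume "e \<in> ?E"
      then obtain x y where xy: "x \<in> P" "y \<in> P" "dist x y = 2" "e = {x,y}" by auto
      from cover[OF xy(1-3)] show "e \<in> ?g ` ?S"
      proof
        assume h: "y - x \<in> R"
        then have "(y - x, x) \<in> ?S" using xy by simp
        moreover have "e = ?g (y - x, x)" using xy by simp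
        ultimately show ?thesis by (rule rev_image_eqI)
      next
        assume h: "x - y \<in> R"
        then have "(x - y, y) \<in> ?S" using xy by simp
        moreover have "e = ?g (x - y, y)" using xy by (simp add: insert_commute)
        ultimately show ?thesis by (rule rev_image_eqI)
      qed
    qed
  qed
  then have "card ?S = card ?E" by (rule bij_betw_same_card)
  moreover have "card ?S = (\<Sum>s\<in>R. card {x\<in>P. x+s\<in>P})"
    by (rule card_SigmaI) (use finR finP in auto)
  ultimately show ?thesis unfolding contact_number_def by simp
qed

lemma card_split:
  assumes "finite P"
  shows "card {x\<in>P. x+s\<in>P} + ee P s = card P"
proof -
  have "card {x\<in>P. x+s\<in>P} + card {x\<in>P. x+s\<notin>P} = card ({x\<in>P. x+s\<in>P} \<union> {x\<in>P. x+s\<notin>P})"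
    by (rule card_Un_disjoint[symmetric]) (use assms in auto)
  also have "{x\<in>P. x+s\<in>P} \<union> {x\<in>P. x+s\<notin>P} = P" by auto
  finally show ?thesis unfolding ee_def .
qed

lemma triple_bound:
  assumes "finite P" "card P > 0" "det3 s1 s2 s3 \<noteq> 0"
  shows "3 * real (card P) powr (2/3) \<le> real (ee P s1) + real (ee P s2) + real (ee P s3)"
  by (rule amgm_lw) (use LW_lattice[OF assms(1,3)] assms(2) in auto)

context lat begin

definition KK where "KK = par ` MM"
definition rep where "rep c = (SOME v. v \<in> MM \<and> par v = c)"
definition RR where "RR = rep ` KK"

lemma rep_in: "c \<in> KK \<Longrightarrow> rep c \<in> MM \<and> par (rep c) = c"
  unfolding KK_def rep_def by (rule someI_ex) auto

lemma MM_L: "v \<in> MM \<Longrightarrow> v \<in> L" unfolding MM_def by auto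

lemma zero_notin_KK: "(False,False,False) \<notin> KK"
proof
  assume "(False,False,False) \<in> KK"
  then obtain v where v: "v \<in> MM" "par v = (False,False,False)" unfolding KK_def by auto
  have "v = 0"
  proof (rule even_small_zero)
    show "v \<in> L" using MM_L[OF v(1)] .
    show "even (c1 v)" "even (c2 v)" "even (c3 v)" using v(2) unfolding par_def by simp_all
    show "(norm v)^2 < 16" using MM_norm[OF v(1)] by simp
  qed
  then show False using MM_norm[OF v(1)] by simp
qed

lemma inj_rep: "inj_on rep KK"
proof (rule inj_onI)
  fix x y assume a: "x \<in> KK" "y \<in> KK" "rep x = rep y"
  have "x = par (rep x)" using rep_in[OF a(1)] by simp
  also have "\<dots> = par (rep y)" using a(3) by simp
  also have "\<dots> = y" using rep_in[OF a(2)] by simp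
  finally show "x = y" .
qed

lemma card_RR: "card RR = card KK"
  unfolding RR_def by (rule card_image[OF inj_rep])

lemma finite_RR: "finite RR" unfolding RR_def by simp

lemma RR_cover:
  assumes "x \<in> L" "y \<in> L" "dist x y = 2"
  shows "y - x \<in> RR \<or> x - y \<in> RR"
proof -
  have d: "y - x \<in> MM" unfolding MM_def using assms L_diff by (simp add: dist_norm norm_minus_commute)
  let ?c = "par (y - x)"
  have c: "?c \<in> KK" unfolding KK_def using d by simp
  have r: "rep ?c \<in> MM" "par (rep ?c) = par (y - x)" using rep_in[OF c] by auto
  have "rep ?c = y - x \<or> rep ?c = - (y - x)" by (rule same_par[OF d r(1) r(2)[symmetric]])
  then show ?thesis
  proof
    assume "rep ?c = y - x"
    then have "y - x = rep ?c" by simp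
    then have "y - x \<in> rep ` KK" by (rule image_eqI) (rule c)
    then show ?thesis unfolding RR_def by simp
  next
    assume "rep ?c = - (y - x)"
    then have "x - y = rep ?c" by simp
    then have "x - y \<in> rep ` KK" by (rule image_eqI) (rule c)
    then show ?thesis unfolding RR_def by simp
  qed
qed

lemma RR_anti: "s \<in> RR \<Longrightarrow> - s \<notin> RR"
proof
  assume s: "s \<in> RR" and ns: "- s \<in> RR"
  obtain c where c: "c \<in> KK" "s = rep c" using s unfolding RR_def by auto
  obtain c' where c': "c' \<in> KK" "- s = rep c'" using ns unfolding RR_def by auto
  have sM: "s \<in> MM" using rep_in[OF c(1)] c(2) by simp
  have "c' = par (- s)" using rep_in[OF c'(1)] c'(2) by simp
  also have "\<dots> = par s" using par_neg[OF MM_L[OF sM]] .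
  also have "\<dots> = c" using rep_in[OF c(1)] c(2) by simp
  finally have "- s = s" using c c' by simp
  then have "s + s = 0" by (metis add.right_inverse)
  then have "2 *\<^sub>R s = 0" by (simp add: scaleR_2)
  then have "s = 0" by simp
  then show False using MM_norm[OF sM] by simp
qed

lemma RR_norm: "s \<in> RR \<Longrightarrow> norm s = 2"
  unfolding RR_def using rep_in MM_norm by auto

lemma contact_RR:
  assumes "finite P" "P \<subseteq> L"
  shows "contact_number P = (\<Sum>s\<in>RR. card {x\<in>P. x+s\<in>P})"
proof (rule contact_sum[OF assms(1) finite_RR])
  fix x y assume "x \<in> P" "y \<in> P" "dist x y = 2"
  then show "y - x \<in> RR \<or> x - y \<in> RR" using RR_cover assms(2) by blast
qed (use RR_anti RR_norm in auto)

lemma contact_RR_real: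
  assumes "finite P" "P \<subseteq> L"
  shows "real (contact_number P) = real (card KK) * real (card P) - (\<Sum>s\<in>RR. real (ee P s))"
proof -
  have "real (contact_number P) = (\<Sum>s\<in>RR. real (card {x\<in>P. x+s\<in>P}))"
    unfolding contact_RR[OF assms] by simp
  also have "\<dots> = (\<Sum>s\<in>RR. real (card P) - real (ee P s))"
  proof (rule sum.cong[OF refl])
    fix s
    have h: "card {x\<in>P. x+s\<in>P} + ee P s = card P" by (rule card_split[OF assms(1)])
    show "real (card {x\<in>P. x+s\<in>P}) = real (card P) - real (ee P s)"
      unfolding h[symmetric] by simp
  qed
  also have "\<dots> = real (card RR) * real (card P) - (\<Sum>s\<in>RR. real (ee P s))"
    by (simp add: sum_subtractf)
  finally show ?thesis unfolding card_RR .
qed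

lemma KK_card_le7: "card KK \<le> 7"
proof -
  have "KK \<subseteq> UNIV - {(False,False,False)}" using zero_notin_KK by auto
  then have "card KK \<le> card (UNIV - {(False,False,False)} :: (bool\<times>bool\<times>bool) set)"
    by (rule card_mono[rotated]) simp
  also have "\<dots> = 7" by (simp add: card_Diff_singleton card_UNIV_b3)
  finally show ?thesis .
qed

lemma KK_not7: "card KK \<noteq> 7"
proof
  assume h: "card KK = 7"
  have sub: "KK \<subseteq> UNIV - {(False,False,False)}" using zero_notin_KK by auto
  have "card (UNIV - {(False,False,False)} :: (bool\<times>bool\<times>bool) set) = 7"
    by (simp add: card_Diff_singleton card_UNIV_b3)
  then have eqK: "KK = UNIV - {(False,False,False)}" using sub h by (intro card_subset_eq) auto
  have "\<forall>c. c \<noteq> (False,False,False) \<longrightarrow> (\<exists>v\<in>MM. par v = c)"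
  proof (intro allI impI)
    fix c :: "bool\<times>bool\<times>bool" assume "c \<noteq> (False,False,False)"
    then have "c \<in> KK" using eqK by simp
    then obtain v where "v \<in> MM" "c = par v" unfolding KK_def by (rule imageE)
    then show "\<exists>v\<in>MM. par v = c" by auto
  qed
  then show False using no7 by simp
qed

lemma triple_rr:
  assumes "finite P" "card P > 0" "x \<in> KK" "y \<in> KK" "z \<in> KK" "bdet x y z"
  shows "3 * real (card P) powr (2/3) \<le> real (ee P (rep x)) + real (ee P (rep y)) + real (ee P (rep z))"
proof (rule triple_bound[OF assms(1,2)])
  show "det3 (rep x) (rep y) (rep z) \<noteq> 0"
  proof (rule det_nz)
    show "rep x \<in> L" "rep y \<in> L" "rep z \<in> L"
      using rep_in[OF assms(3)] rep_in[OF assms(4)] rep_in[OF assms(5)] MM_L by simp_all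
    have "par (rep x) = x" "par (rep y) = y" "par (rep z) = z"
      using rep_in[OF assms(3)] rep_in[OF assms(4)] rep_in[OF assms(5)] by simp_all
    then show "bdet (par (rep x)) (par (rep y)) (par (rep z))" using assms(6) by simp
  qed
qed

end

context lat begin

lemma sum_sub:
  assumes "A \<subseteq> KK"
  shows "(\<Sum>c\<in>A. real (ee P (rep c))) \<le> (\<Sum>s\<in>RR. real (ee P s))"
proof -
  have inj: "inj_on rep A" using inj_rep assms by (rule inj_on_subset)
  have "(\<Sum>c\<in>A. real (ee P (rep c))) = (\<Sum>s\<in>rep ` A. real (ee P s))"
    by (rule sum.reindex[OF inj, symmetric, unfolded comp_def])
  also have "\<dots> \<le> (\<Sum>s\<in>RR. real (ee P s))"
    by (rule sum_mono2[OF finite_RR]) (use assms in \<open>auto simp: RR_def\<close>)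
  finally show ?thesis .
qed

lemma main_bound:
  assumes fin: "finite P" and PL: "P \<subseteq> L" and n2: "card P \<ge> 2"
  shows "real (contact_number P) < 6 * real (card P) - alpha * real (card P) powr (2/3)"
proof -
  define n where "n = card P"
  define k where "k = card KK"
  define S where "S = (\<Sum>s\<in>RR. real (ee P s))"
  have C: "real (contact_number P) = real k * real n - S"
    unfolding k_def n_def S_def by (rule contact_RR_real[OF fin PL])
  have S0: "S \<ge> 0" unfolding S_def by (rule sum_nonneg) simp
  have n0: "card P > 0" using n2 by simp
  have k7: "k \<le> 7" "k \<noteq> 7" unfolding k_def using KK_card_le7 KK_not7 by auto
  consider "k \<le> 3" | "k = 4 \<or> k = 5" | "k = 6" using k7 by linarith
  then show ?thesis
  proof cases
    case 1
    have "real k \<le> 3" using 1 by simp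
    then have "real k * real n \<le> 3 * real n" by (rule mult_right_mono) simp
    then have "real (contact_number P) \<le> 3 * real n" using C S0 by linarith
    also have "\<dots> < 6 * real n - alpha * real n powr (2/3)" by (rule R1) (use n2 n_def in simp)
    finally show ?thesis unfolding n_def .
  next
    case 2
    then have "card KK \<ge> 4" unfolding k_def by auto
    then obtain x y z where xyz: "x \<in> KK" "y \<in> KK" "z \<in> KK" "x \<noteq> y" "y \<noteq> z" "x \<noteq> z" "bdet x y z"
      using tri4[OF zero_notin_KK] by blast
    have "3 * real n powr (2/3) \<le> real (ee P (rep x)) + real (ee P (rep y)) + real (ee P (rep z))"
      unfolding n_def by (rule triple_rr[OF fin n0 xyz(1-3,7)])
    also have "\<dots> = (\<Sum>c\<in>{x,y,z}. real (ee P (rep c)))" using xyz(4-6) by simp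
    also have "\<dots> \<le> S" unfolding S_def by (rule sum_sub) (use xyz in auto)
    finally have S3: "3 * real n powr (2/3) \<le> S" .
    have "real k * real n \<le> 5 * real n" using 2 by auto
    then have "real (contact_number P) \<le> 5 * real n - 3 * real n powr (2/3)" using C S3 by linarith
    also have "\<dots> < 6 * real n - alpha * real n powr (2/3)" by (rule R2) (use n2 n_def in simp)
    finally show ?thesis unfolding n_def .
  next
    case 3
    have sub: "KK \<subseteq> UNIV - {(False,False,False)}" using zero_notin_KK by auto
    have c7: "card (UNIV - {(False,False,False)} :: (bool\<times>bool\<times>bool) set) = 7"
      by (simp add: card_Diff_singleton card_UNIV_b3)
    have "UNIV - {(False,False,False)} - KK \<noteq> {}"
    proof
      assume "UNIV - {(False,False,False)} - KK = {}"
      then have "UNIV - {(False,False,False)} = KK" using sub by auto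
      then show False using c7 3 k_def by simp
    qed
    then obtain p where p: "p \<noteq> (False,False,False)" "p \<notin> KK" by auto
    have sub2: "KK \<subseteq> UNIV - {(False,False,False), p}" using sub p by auto
    have "card (UNIV - {(False,False,False), p}) = 6"
      using p(1) card_UNIV_b3 by (simp add: card_Diff_subset)
    then have eqK: "KK = UNIV - {(False,False,False), p}"
      using sub2 3 k_def by (intro card_subset_eq) auto
    obtain x1 x2 x3 y1 y2 y3 where w: "distinct [x1,x2,x3,y1,y2,y3]"
      "\<forall>v\<in>set [x1,x2,x3,y1,y2,y3]. v \<noteq> (False,False,False) \<and> v \<noteq> p"
      "bdet x1 x2 x3" "bdet y1 y2 y3"
      using six_aux[OF p(1)] unfolding six_ok_def by blast
    have inK: "x1 \<in> KK" "x2 \<in> KK" "x3 \<in> KK" "y1 \<in> KK" "y2 \<in> KK" "y3 \<in> KK"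
      using w(2) unfolding eqK by auto
    have t1: "3 * real n powr (2/3) \<le> real (ee P (rep x1)) + real (ee P (rep x2)) + real (ee P (rep x3))"
      unfolding n_def by (rule triple_rr[OF fin n0 inK(1-3) w(3)])
    have t2: "3 * real n powr (2/3) \<le> real (ee P (rep y1)) + real (ee P (rep y2)) + real (ee P (rep y3))"
      unfolding n_def by (rule triple_rr[OF fin n0 inK(4-6) w(4)])
    have "(\<Sum>c\<in>{x1,x2,x3,y1,y2,y3}. real (ee P (rep c))) =
      real (ee P (rep x1)) + real (ee P (rep x2)) + real (ee P (rep x3)) +
      (real (ee P (rep y1)) + real (ee P (rep y2)) + real (ee P (rep y3)))"
      using w(1) by (simp add: algebra_simps)
    moreover have "(\<Sum>c\<in>{x1,x2,x3,y1,y2,y3}. real (ee P (rep c))) \<le> S"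
      unfolding S_def by (rule sum_sub) (use inK in auto)
    ultimately have S6: "6 * real n powr (2/3) \<le> S" using t1 t2 by linarith
    have "real (contact_number P) \<le> 6 * real n - 6 * real n powr (2/3)" using C S6 3 by simp
    also have "\<dots> < 6 * real n - alpha * real n powr (2/3)" by (rule R3) (use n2 n_def in simp)
    finally show ?thesis unfolding n_def .
  qed
qed

end

theorem theorem1:
  fixes L :: "(real^3) set" and n :: nat
  assumes "lattice3 L"
    and "\<forall>v\<in>L. v \<noteq> 0 \<longrightarrow> norm v \<ge> 2"
    and "\<exists>v\<in>L. v \<noteq> 0 \<and> norm v = 2"
    and "n \<ge> 2"
  shows "real (lattice_contact_max L n)
           < 6 * real n - 3 * (18 * pi) powr (1/3) / pi * real n powr (2/3)"
proof -
  obtain b1 b2 b3 where b: "card {b1, b2, b3} = 3" "independent {b1, b2, b3}"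
      "L = {of_int i *\<^sub>R b1 + of_int j *\<^sub>R b2 + of_int k *\<^sub>R b3 | i j k. True}"
    using assms(1) unfolding lattice3_def by blast
  interpret lat b1 b2 b3 L
  proof
    show "det3 b1 b2 b3 \<noteq> 0" by (rule det3_indep[OF b(2,1)])
  qed (use b(3) assms(2) in auto)
  define B where "B = 6 * real n - alpha * real n powr (2/3)"
  have Beq: "6 * real n - 3 * (18 * pi) powr (1/3) / pi * real n powr (2/3) = B"
    unfolding B_def alpha_def by simp
  define SS where "SS = {contact_number P | P. P \<subseteq> L \<and> unit_ball_packing P \<and> card P = n}"
  have bnd: "real c < B" if "c \<in> SS" for c
  proof -
    from that obtain P where P: "c = contact_number P" "P \<subseteq> L" "unit_ball_packing P" "card P = n"
      unfolding SS_def by blast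
    have "finite P" using P(3) unfolding unit_ball_packing_def by simp
    then show ?thesis unfolding B_def P(1) using main_bound[of P] P(2,4) assms(4) by simp
  qed
  have fin: "finite SS"
  proof (rule finite_subset)
    show "SS \<subseteq> {..<6*n}"
    proof
      fix c assume c: "c \<in> SS"
      have "alpha * real n powr (2/3) \<ge> 0" using alpha_pos by simp
      then have "real c < real (6*n)" using bnd[OF c] unfolding B_def by simp
      then show "c \<in> {..<6*n}" by simp
    qed
  qed simp
  obtain v where v: "v \<in> L" "v \<noteq> 0" "norm v = 2" using assms(3) by blast
  define P0 where "P0 = (\<lambda>i::nat. real i *\<^sub>R v) ` {..<n}"
  have inj: "inj_on (\<lambda>i::nat. real i *\<^sub>R v) {..<n}"
    using v(2) by (auto simp: inj_on_def)
  have cP0: "card P0 = n" unfolding P0_def using card_image[OF inj] by simp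
  have P0L: "P0 \<subseteq> L"
  proof
    fix x assume "x \<in> P0"
    then obtain i :: nat where x: "x = real i *\<^sub>R v" unfolding P0_def by auto
    have "x = of_int (int i) *\<^sub>R cf (c1 v) (c2 v) (c3 v)" using x L_cases[OF v(1)] by simp
    also have "\<dots> = cf (int i * c1 v) (int i * c2 v) (int i * c3 v)" by (rule cf_scale)
    finally show "x \<in> L" by simp
  qed
  have pack: "unit_ball_packing P0"
    unfolding unit_ball_packing_def
  proof
    show "finite P0" unfolding P0_def by simp
    show "\<forall>x\<in>P0. \<forall>y\<in>P0. x \<noteq> y \<longrightarrow> 2 \<le> dist x y"
    proof (intro ballI impI)
      fix x y assume "x \<in> P0" "y \<in> P0" "x \<noteq> y"
      then obtain i j :: nat where ij: "x = real i *\<^sub>R v" "y = real j *\<^sub>R v" "i \<noteq> j" unfolding P0_def by auto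
      have "dist x y = \<bar>real i - real j\<bar> * 2"
        unfolding ij dist_norm using v(3) by (simp add: scaleR_diff_left[symmetric])
      moreover have "\<bar>real i - real j\<bar> \<ge> 1" using ij(3) by linarith
      ultimately show "2 \<le> dist x y" by simp
    qed
  qed
  have ne: "SS \<noteq> {}" unfolding SS_def using P0L pack cP0 by blast
  have "lattice_contact_max L n = Max SS" unfolding lattice_contact_max_def SS_def ..
  moreover have "Max SS \<in> SS" using fin ne by simp
  ultimately show ?thesis using bnd Beq by simp
qed

end
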